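(* Let $0<s<1$, and let $0<a<1/3$ be such that $a<1/2^{1+s}$. Let $C_a\subset I=[0,1]$ be the fat Cantor set described below. Then \[\|\chi_{C_a}\|_{B^s_{1,1}(I)}\simeq\sum_{j=1}^\infty(2a^{1-s})^j,\] that is, there is a constant $C\ge1$ depending only on $s$ and $a$ such that $C^{-1}\sum_{j\ge1}(2a^{1-s})^j\le\|\chi_{C_a}\|_{B^s_{1,1}(I)}\le C\sum_{j\ge1}(2a^{1-s})^j$ (in particular one side is finite if and only if the other is).
   Context: $I=[0,1]$ carries the Euclidean distance and Lebesgue measure $\mathcal{H}^1$. Construction of $C_a$: remove the open interval $I_{1,1}$ of length $a$ centered at the center of $I$, leaving two closed intervals $C_{1,1},C_{1,2}$. Inductively, at stage $j$, remove from the center of each of the $2^{j-1}$ closed intervals $C_{j-1,k}$ an open interval $I_{j,k}$ of length $a^j$, leaving $2^j$ closed intervals $C_{j,k}$. Set $C_a=I\setminus\bigcup_{j\ge1}\bigcup_{k=1}^{2^{j-1}}I_{j,k}$. The Besov energy on $I$ is $\|u\|_{B^s_{1,1}(I)}=\int_I\int_I\frac{|u(y)-u(x)|}{|x-y|^s\,\mathcal{H}^1(B(x,|x-y|))}\,dy\,dx$, where $B(x,r)=\{y\in I:|x-y|<r\}$. *)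

theory Defs
  imports "HOL-Analysis.Analysis"
begin

text \<open>Closed intervals C_{j,k} of stage j, represented by their endpoint pairs (l,r).\<close>
fun cantor_stage :: "real \<Rightarrow> nat \<Rightarrow> (real \<times> real) set" where
  "cantor_stage a 0 = {(0, 1)}"
| "cantor_stage a (Suc j) =
     (\<Union>(l, r)\<in>cantor_stage a j.
        {(l, (l + r) / 2 - a ^ Suc j / 2), ((l + r) / 2 + a ^ Suc j / 2, r)})"

definition removed_intervals :: "real \<Rightarrow> nat \<Rightarrow> real set set" where
  "removed_intervals a j =
     (\<lambda>(l, r). {(l + r) / 2 - a ^ j / 2 <..< (l + r) / 2 + a ^ j / 2}) ` cantor_stage a (j - 1)"

definition fat_cantor :: "real \<Rightarrow> real set" where
  "fat_cantor a = {0..1} - (\<Union>j\<in>{1..}. \<Union>(removed_intervals a j))"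

text \<open>H^1(B(x,r)) with B(x,r) = {y \<in> I. |x - y| < r}.\<close>
definition ball_I_meas :: "real \<Rightarrow> real \<Rightarrow> real" where
  "ball_I_meas x r = measure lborel {y \<in> {0..1}. \<bar>x - y\<bar> < r}"

definition besov_energy :: "real \<Rightarrow> (real \<Rightarrow> real) \<Rightarrow> ennreal" where
  "besov_energy s u =
     (\<integral>\<^sup>+ x. (\<integral>\<^sup>+ y. ennreal (\<bar>u y - u x\<bar> /
          (\<bar>x - y\<bar> powr s * ball_I_meas x \<bar>x - y\<bar>)) * indicator {0..1} y \<partial>lborel)
        * indicator {0..1} x \<partial>lborel)"

end

theory Submission
  imports Defs
begin


lemma tail_right:
  fixes x g e :: real assumes "x < g" "e < -1"
  shows "(\<integral>\<^sup>+y. ennreal (\<bar>x - y\<bar> powr e) * indicator {g..} y \<partial>lborel) = ennreal (- ((g-x) powr (e+1)) / (e+1))"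
proof -
  have "(\<integral>\<^sup>+y. ennreal (\<bar>x - y\<bar> powr e) * indicator {g..} y \<partial>lborel)
      = ennreal \<bar>1::real\<bar> * (\<integral>\<^sup>+t. ennreal (\<bar>x - (x + 1 * t)\<bar> powr e) * indicator {g..} (x + 1 * t) \<partial>lborel)"
    by (rule nn_integral_real_affine) auto
  also have "\<dots> = (\<integral>\<^sup>+t. ennreal (t powr e) * indicator {g-x..} t \<partial>lborel)"
    using assms by (auto simp: indicator_def intro!: nn_integral_cong)
  also have "\<dots> = ennreal (- ((g-x) powr (e+1)) / (e+1))"
    using assms by (intro nn_integral_has_integral_lebesgue' has_integral_powr_to_inf) auto
  finally show ?thesis .
qed

lemma tail_left:
  fixes x g e :: real assumes "g < x" "e < -1"
  shows "(\<integral>\<^sup>+y. ennreal (\<bar>x - y\<bar> powr e) * indicator {..g} y \<partial>lborel) = ennreal (- ((x-g) powr (e+1)) / (e+1))"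
proof -
  have "(\<integral>\<^sup>+y. ennreal (\<bar>x - y\<bar> powr e) * indicator {..g} y \<partial>lborel)
      = ennreal \<bar>-1::real\<bar> * (\<integral>\<^sup>+t. ennreal (\<bar>x - (x + (-1) * t)\<bar> powr e) * indicator {..g} (x + (-1) * t) \<partial>lborel)"
    by (rule nn_integral_real_affine) auto
  also have "\<dots> = (\<integral>\<^sup>+t. ennreal (t powr e) * indicator {x-g..} t \<partial>lborel)"
    using assms by (auto simp: indicator_def intro!: nn_integral_cong)
  also have "\<dots> = ennreal (- ((x-g) powr (e+1)) / (e+1))"
    using assms by (intro nn_integral_has_integral_lebesgue' has_integral_powr_to_inf) auto
  finally show ?thesis .
qed

lemma head_left:
  fixes g1 g2 e :: real assumes "g1 < g2" "-1 < e"
  shows "(\<integral>\<^sup>+x. ennreal ((x - g1) powr e) * indicator {g1..g2} x \<partial>lborel) = ennreal ((g2-g1) powr (e+1) / (e+1))"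
proof -
  have "(\<integral>\<^sup>+x. ennreal ((x - g1) powr e) * indicator {g1..g2} x \<partial>lborel)
      = ennreal \<bar>1::real\<bar> * (\<integral>\<^sup>+t. ennreal (((g1 + 1 * t) - g1) powr e) * indicator {g1..g2} (g1 + 1 * t) \<partial>lborel)"
    by (rule nn_integral_real_affine) auto
  also have "\<dots> = (\<integral>\<^sup>+t. ennreal (t powr e) * indicator {0..g2-g1} t \<partial>lborel)"
    using assms by (auto simp: indicator_def intro!: nn_integral_cong)
  also have "\<dots> = ennreal ((g2-g1) powr (e+1) / (e+1))"
    using assms by (intro nn_integral_has_integral_lebesgue' has_integral_powr_from_0) auto
  finally show ?thesis .
qed

lemma head_right:
  fixes g1 g2 e :: real assumes "g1 < g2" "-1 < e"
  shows "(\<integral>\<^sup>+x. ennreal ((g2 - x) powr e) * indicator {g1..g2} x \<partial>lborel) = ennreal ((g2-g1) powr (e+1) / (e+1))"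
proof -
  have "(\<integral>\<^sup>+x. ennreal ((g2 - x) powr e) * indicator {g1..g2} x \<partial>lborel)
      = ennreal \<bar>-1::real\<bar> * (\<integral>\<^sup>+t. ennreal ((g2 - (g2 + (-1) * t)) powr e) * indicator {g1..g2} (g2 + (-1) * t) \<partial>lborel)"
    by (rule nn_integral_real_affine) auto
  also have "\<dots> = (\<integral>\<^sup>+t. ennreal (t powr e) * indicator {0..g2-g1} t \<partial>lborel)"
    using assms by (auto simp: indicator_def intro!: nn_integral_cong)
  also have "\<dots> = ennreal ((g2-g1) powr (e+1) / (e+1))"
    using assms by (intro nn_integral_has_integral_lebesgue' has_integral_powr_from_0) auto
  finally show ?thesis .
qed

lemma bm_bounds:
  fixes x y :: real assumes "x \<in> {0..1}" "y \<in> {0..1}" "x \<noteq> y"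
  shows "\<bar>x - y\<bar> \<le> measure lborel {z \<in> {0..1}. \<bar>x - z\<bar> < \<bar>x - y\<bar>}
       \<and> measure lborel {z \<in> {0..1}. \<bar>x - z\<bar> < \<bar>x - y\<bar>} \<le> 2 * \<bar>x - y\<bar>"
proof -
  define r where "r = \<bar>x - y\<bar>"
  define B where "B = {z \<in> {0..1}. \<bar>x - z\<bar> < r}"
  have r: "r > 0" using assms by (simp add: r_def)
  have Beq: "B = {0..1} \<inter> {x - r <..< x + r}" by (auto simp: B_def abs_less_iff)
  have Bs: "B \<in> sets lborel" unfolding Beq by simp
  have "emeasure lborel B \<le> emeasure lborel {x - r <..< x + r}" unfolding Beq by (intro emeasure_mono) auto
  also have "\<dots> = ennreal (2 * r)" using r by simp
  finally have up: "emeasure lborel B \<le> ennreal (2*r)" .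
  have "{min x y <..< max x y} \<subseteq> B" using assms by (auto simp: B_def r_def)
  then have "emeasure lborel {min x y <..< max x y} \<le> emeasure lborel B" using Bs by (intro emeasure_mono) auto
  moreover have "emeasure lborel {min x y <..< max x y} = ennreal r" by (auto simp: r_def)
  ultimately have lo: "ennreal r \<le> emeasure lborel B" by simp
  have fin: "emeasure lborel B \<noteq> top" using up by (metis ennreal_neq_top neq_top_trans)
  then have eq: "emeasure lborel B = ennreal (measure lborel B)" by (rule emeasure_eq_ennreal_measure)
  have "measure lborel B \<le> 2 * r" using up r unfolding eq by (simp add: ennreal_le_iff2)
  moreover have "r \<le> measure lborel B" using lo r unfolding eq by (simp add: ennreal_le_iff2)
  ultimately show ?thesis unfolding B_def r_def by simp
qed




locale fatc = fixes a :: real assumes apos: "0 < a" and asmall: "a < 1/3"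
begin

abbreviation S where "S m \<equiv> cantor_stage a m"
definition al where "al = (1 - 3*a)/(1 - 2*a)"
definition Lm where "Lm m = al / 2^m + a^(Suc m)/(1-2*a)"
definition ch :: "nat \<Rightarrow> real \<times> real \<Rightarrow> (real \<times> real) set" where
  "ch i p = {(fst p, (fst p + snd p)/2 - a^i/2), ((fst p + snd p)/2 + a^i/2, snd p)}"
definition iv :: "real \<times> real \<Rightarrow> real set" where "iv p = {fst p .. snd p}"
definition gp :: "nat \<Rightarrow> real \<times> real \<Rightarrow> real set" where
  "gp i p = {(fst p + snd p)/2 - a^i/2 <..< (fst p + snd p)/2 + a^i/2}"
definition sub where "sub p q \<longleftrightarrow> fst q \<le> fst p \<and> snd p \<le> snd q"
definition sep where "sep p q \<longleftrightarrow> snd p < fst q \<or> snd q < fst p"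

lemma al_pos: "al > 0" using apos asmall by (simp add: al_def)

lemma stage_Suc: "S (Suc j) = (\<Union>p\<in>S j. ch (Suc j) p)"
  by (auto simp: ch_def split_def)

lemma Lm_pos: "Lm m > 0" using al_pos apos asmall by (auto simp: Lm_def intro!: add_pos_pos divide_pos_pos)

lemma Lm_Suc: "Lm (Suc m) = (Lm m - a^(Suc m))/2"
proof -
  have d: "1 - 2*a > 0" using asmall by simp
  have "a^(Suc (Suc m))/(1-2*a) = (a^(Suc m)/(1-2*a) - a^(Suc m))/2"
    using d by (simp add: field_simps)
  moreover have "al / 2^(Suc m) = (al/2^m)/2" by simp
  ultimately show ?thesis unfolding Lm_def by (simp add: add_divide_distrib diff_divide_distrib)
qed

lemma Lm_gt: "a^(Suc m) < Lm m"
proof -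
  have "a^(Suc m) \<le> a^(Suc m)/(1-2*a)" using apos asmall
    by (simp add: field_simps)
  moreover have "al/2^m > 0" using al_pos by simp
  ultimately show ?thesis by (simp add: Lm_def)
qed

lemma al_eq: "al + a/(1-2*a) = 1"
proof -
  have d: "1 - 2*a > 0" using asmall by simp
  have "al + a/(1-2*a) = ((1-3*a)+a)/(1-2*a)" unfolding al_def by (rule add_divide_distrib[symmetric])
  also have "\<dots> = 1" using d by simp
  finally show ?thesis .
qed

lemma Lm_le: "Lm m \<le> 1/2^m"
proof -
  have "(2*a)^m \<le> 1" using apos asmall by (intro power_le_one) auto
  then have "a * (2*a)^m / (1-2*a) \<le> a / (1-2*a)" using apos asmall
    by (intro divide_right_mono) (auto simp: mult_left_le)
  then have "al + a * (2*a)^m / (1-2*a) \<le> 1" using al_eq by linarith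
  moreover have "Lm m = (al + a * (2*a)^m / (1-2*a)) / 2^m"
    by (simp add: Lm_def add_divide_distrib power_mult_distrib)
  ultimately show ?thesis by (simp add: divide_right_mono)
qed

lemma ch_props: assumes "snd p - fst p = Lm m" "q \<in> ch (Suc m) p"
  shows "sub q p \<and> snd q - fst q = Lm (Suc m)"
  using assms Lm_gt[of m] Lm_pos[of m] apos by (auto simp: ch_def sub_def Lm_Suc field_simps)

lemma stage_SucE: "p \<in> S (Suc m) \<Longrightarrow> \<exists>q\<in>S m. p \<in> ch (Suc m) q"
  using stage_Suc[of m] by blast

lemma len: "p \<in> S m \<Longrightarrow> snd p - fst p = Lm m \<and> 0 \<le> fst p \<and> snd p \<le> 1"
proof (induction m arbitrary: p)
  case 0 then show ?case using al_eq by (auto simp: Lm_def)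
next
  case (Suc m)
  then obtain q where q: "q \<in> S m" "p \<in> ch (Suc m) q" using stage_SucE by blast
  with Suc.IH[OF q(1)] ch_props[of q m p] show ?case by (auto simp: sub_def)
qed

lemma sep_stage: "p \<in> S m \<Longrightarrow> q \<in> S m \<Longrightarrow> p \<noteq> q \<Longrightarrow> sep p q"
proof (induction m arbitrary: p q)
  case 0 then show ?case by simp
next
  case (Suc m)
  from Suc.prems obtain p' where p': "p' \<in> S m" "p \<in> ch (Suc m) p'" using stage_SucE by blast
  from Suc.prems obtain q' where q': "q' \<in> S m" "q \<in> ch (Suc m) q'" using stage_SucE by blast
  have lp: "snd p' - fst p' = Lm m" "snd q' - fst q' = Lm m" using len p' q' by auto
  have ap: "a^(Suc m) > 0" using apos by simp
  show ?case
  proof (cases "p' = q'")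
    case True
    then show ?thesis using p' q' Suc.prems(3) ap lp by (auto simp: ch_def sep_def)
  next
    case False
    then have "sep p' q'" using Suc.IH p'(1) q'(1) by blast
    moreover have "sub p p'" "sub q q'" using ch_props lp p' q' by blast+
    ultimately show ?thesis by (auto simp: sep_def sub_def)
  qed
qed

lemma anc: "q \<in> S (m+k) \<Longrightarrow> \<exists>p\<in>S m. sub q p"
proof (induction k arbitrary: q)
  case 0 then show ?case by (auto simp: sub_def)
next
  case (Suc k)
  then have "q \<in> S (Suc (m+k))" by simp
  then obtain q' where q': "q' \<in> S (m+k)" "q \<in> ch (Suc (m+k)) q'" using stage_SucE by blast
  then have "sub q q'" using ch_props len by blast
  moreover obtain p where "p \<in> S m" "sub q' p" using Suc.IH q' by blast
  ultimately show ?case unfolding sub_def by (metis order_trans)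
qed

lemma gap_sub: "p \<in> S m \<Longrightarrow> gp (Suc m) p \<subseteq> iv p"
  using len[of p m] Lm_gt[of m] by (auto simp: gp_def iv_def field_simps)

lemma gap_ch: "q \<in> ch i p \<Longrightarrow> gp i p \<inter> iv q = {}"
  by (auto simp: gp_def iv_def ch_def)

lemma gap_stage_disj: assumes "p \<in> S m" "q \<in> S n" "n > m"
  shows "gp (Suc m) p \<inter> iv q = {}"
proof -
  obtain k where n: "n = Suc m + k" using assms(3) less_iff_Suc_add by blast
  obtain q' where q': "q' \<in> S (Suc m)" "sub q q'" using anc assms(2) n by blast
  obtain p' where p': "p' \<in> S m" "q' \<in> ch (Suc m) p'" using q'(1) using stage_SucE by blast
  have "gp (Suc m) p \<inter> iv q' = {}"
  proof (cases "p = p'")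
    case True then show ?thesis using gap_ch p' by blast
  next
    case False
    then have "sep p p'" using sep_stage assms(1) p'(1) by blast
    moreover have "sub q' p'" using ch_props len p' by blast
    moreover have "gp (Suc m) p \<subseteq> iv p" using gap_sub assms(1) .
    ultimately show ?thesis by (auto simp: sep_def sub_def iv_def)
  qed
  then show ?thesis using q'(2) by (auto simp: sub_def iv_def)
qed

lemma gaps_disj: assumes "p \<in> S m" "q \<in> S n" "(m,p) \<noteq> (n,q)"
  shows "gp (Suc m) p \<inter> gp (Suc n) q = {}"
proof (cases "m = n")
  case True
  then have "sep p q" using assms sep_stage by blast
  then show ?thesis using gap_sub[OF assms(1)] gap_sub[OF assms(2)] True
    by (fastforce simp: sep_def iv_def subset_eq)
next
  case False
  then show ?thesis
  proof (cases "m < n")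
    case True
    then show ?thesis using gap_stage_disj[OF assms(1,2) True] gap_sub[OF assms(2)] by blast
  next
    case False
    then have "n < m" using \<open>m \<noteq> n\<close> by simp
    then show ?thesis using gap_stage_disj[OF assms(2,1)] gap_sub[OF assms(1)] by blast
  qed
qed

primrec desc :: "nat \<Rightarrow> real \<times> real \<Rightarrow> nat \<Rightarrow> (real \<times> real) set" where
  "desc m J 0 = {J}"
| "desc m J (Suc k) = (\<Union>q\<in>desc m J k. ch (Suc (m + k)) q)"

lemma desc_card: "finite (desc m J k) \<and> card (desc m J k) \<le> 2^k"
proof (induction k)
  case 0 then show ?case by simp
next
  case (Suc k)
  have c2: "finite (ch i q) \<and> card (ch i q) \<le> 2" for i q
    by (auto simp: ch_def card_insert_if)
  have "card (desc m J (Suc k)) \<le> (\<Sum>q\<in>desc m J k. card (ch (Suc (m+k)) q))"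
    by (simp add: card_UN_le Suc.IH)
  also have "\<dots> \<le> (\<Sum>q\<in>desc m J k. 2)" by (intro sum_mono) (use c2 in auto)
  also have "\<dots> \<le> 2^Suc k" using Suc.IH by simp
  finally show ?case using Suc.IH c2 by simp
qed

lemma sub_desc: "J \<in> S m \<Longrightarrow> q \<in> S (m+k) \<Longrightarrow> sub q J \<Longrightarrow> q \<in> desc m J k"
proof (induction k arbitrary: q)
  case 0 then show ?case using sep_stage[of q m J] len[of q m] Lm_pos[of m]
    by (fastforce simp: sep_def sub_def)
next
  case (Suc k)
  then have "q \<in> S (Suc (m+k))" by simp
  then obtain q' where q': "q' \<in> S (m+k)" "q \<in> ch (Suc (m+k)) q'" using stage_SucE by blast
  have sq: "sub q q'" using ch_props len q' by blast
  obtain J' where J': "J' \<in> S m" "sub q' J'" using anc q'(1) by blast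
  have lq: "fst q \<le> snd q" using len[of q "Suc (m+k)"] Suc.prems Lm_pos[of "Suc (m+k)"] by simp
  have "J' = J"
  proof (rule ccontr)
    assume "J' \<noteq> J"
    then have "sep J' J" using sep_stage J'(1) Suc.prems(1) by blast
    then show False using sq J'(2) Suc.prems(3) lq by (auto simp: sep_def sub_def)
  qed
  then have "q' \<in> desc m J k" using Suc.IH[OF Suc.prems(1) q'(1)] J'(2) by simp
  then show ?case using q'(2) by auto
qed

lemma card_stage: "finite (S m) \<and> card (S m) = 2^m"
proof (induction m)
  case 0 then show ?case by simp
next
  case (Suc m)
  have c2: "finite (ch (Suc m) p) \<and> card (ch (Suc m) p) = 2" if "p \<in> S m" for p
  proof -
    have "a * a^m > 0" using apos by simp
    then have "fst p < (fst p + snd p)/2 + a^(Suc m)/2"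
      using len[OF that] Lm_pos[of m] by (simp add: field_simps)
    then show ?thesis by (auto simp: ch_def)
  qed
  have dj: "ch (Suc m) p \<inter> ch (Suc m) q = {}" if "p \<in> S m" "q \<in> S m" "p \<noteq> q" for p q
  proof (rule ccontr)
    assume "ch (Suc m) p \<inter> ch (Suc m) q \<noteq> {}"
    then obtain x where x: "x \<in> ch (Suc m) p" "x \<in> ch (Suc m) q" by blast
    have "sub x p" "sub x q" "snd x - fst x = Lm (Suc m)"
      using ch_props len that x by blast+
    moreover have "sep p q" using sep_stage that by blast
    ultimately show False using Lm_pos[of "Suc m"] by (auto simp: sep_def sub_def)
  qed
  have "card (S (Suc m)) = (\<Sum>p\<in>S m. card (ch (Suc m) p))"
    unfolding stage_Suc using Suc.IH c2 dj by (intro card_UN_disjoint) auto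
  also have "\<dots> = (\<Sum>p\<in>S m. 2)" using c2 by simp
  finally have cardeq: "card (S (Suc m)) = 2 * 2^m" using Suc.IH by simp
  have fin: "finite (S (Suc m))" unfolding stage_Suc using Suc.IH c2 by blast
  show ?case using fin cardeq by (metis power_Suc)
qed

lemma leftmost: "p \<in> S m \<Longrightarrow> (fst p, fst p + Lm (m+k)) \<in> S (m+k)"
proof (induction k)
  case 0
  have "fst p + Lm m = snd p" using len[OF 0] by simp
  then show ?case using 0 by simp
next
  case (Suc k)
  let ?q = "(fst p, fst p + Lm (m+k))"
  have "(fst ?q, (fst ?q + snd ?q)/2 - a^(Suc (m+k))/2) \<in> S (Suc (m+k))"
    unfolding stage_Suc ch_def using Suc by blast
  moreover have "(fst ?q + snd ?q)/2 - a^(Suc (m+k))/2 = fst p + Lm (Suc (m+k))"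
    by (simp add: Lm_Suc field_simps)
  ultimately show ?case by simp
qed

lemma right_child: "p \<in> S m \<Longrightarrow> ((fst p + snd p)/2 + a^(Suc m)/2, snd p) \<in> S (Suc m)"
  unfolding stage_Suc ch_def by blast

abbreviation C where "C \<equiv> fat_cantor a"

definition U where "U = (\<Union>i. \<Union>p\<in>S i. gp (Suc i) p)"

lemma C_eq: "C = {0..1} - U"
proof -
  have "(\<Union>j\<in>{1..}. \<Union>(removed_intervals a j)) = U"
  proof
    show "(\<Union>j\<in>{1..}. \<Union>(removed_intervals a j)) \<subseteq> U"
    proof
      fix x assume "x \<in> (\<Union>j\<in>{1..}. \<Union>(removed_intervals a j))"
      then obtain j G where j: "j \<ge> 1" "G \<in> removed_intervals a j" "x \<in> G" by auto
      then obtain i where i: "j = Suc i" by (cases j) auto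
      from j obtain p where "p \<in> S i" "G = gp (Suc i) p"
        unfolding removed_intervals_def gp_def i by (auto simp: split_def)
      then show "x \<in> U" unfolding U_def using j by blast
    qed
  next
    show "U \<subseteq> (\<Union>j\<in>{1..}. \<Union>(removed_intervals a j))"
    proof
      fix x assume "x \<in> U"
      then obtain i p where "p \<in> S i" "x \<in> gp (Suc i) p" unfolding U_def by blast
      then have "gp (Suc i) p \<in> removed_intervals a (Suc i)"
        unfolding removed_intervals_def gp_def by (auto simp: split_def)
      then show "x \<in> (\<Union>j\<in>{1..}. \<Union>(removed_intervals a j))"
        using \<open>x \<in> gp (Suc i) p\<close> by (intro UN_I[of "Suc i"]) auto
    qed
  qed
  then show ?thesis unfolding fat_cantor_def by simp
qed

lemma open_U: "open U"
  unfolding U_def gp_def by (intro open_UN ballI) auto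

lemma C_closed: "closed C"
  unfolding C_eq using open_U by (intro closed_Diff) auto

lemma C_sets[measurable]: "C \<in> sets borel"
  using C_closed by (rule borel_closed)

lemma C_sub: "C \<subseteq> {0..1}" unfolding C_eq by auto

lemma gap_notC: "p \<in> S i \<Longrightarrow> x \<in> gp (Suc i) p \<Longrightarrow> x \<notin> C"
  unfolding C_eq U_def by blast

lemma gap_I: "p \<in> S i \<Longrightarrow> gp (Suc i) p \<subseteq> {0..1}"
  using gap_sub[of p i] len[of p i] by (auto simp: iv_def)

lemma density: assumes J: "J \<in> S m"
  shows "ennreal (al/2^m) \<le> emeasure lborel (C \<inter> iv J)"
proof -
  define V where "V = (\<Union>k. \<Union>q\<in>desc m J k. gp (Suc (m+k)) q)"
  have sub1: "iv J - V \<subseteq> C \<inter> iv J"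
  proof
    fix x assume x: "x \<in> iv J - V"
    have "x \<in> {0..1}" using x len[OF J] by (auto simp: iv_def)
    moreover have "x \<notin> U"
    proof
      assume "x \<in> U"
      then obtain i p where p: "p \<in> S i" "x \<in> gp (Suc i) p" unfolding U_def by blast
      show False
      proof (cases "i < m")
        case True
        then show False using gap_stage_disj[OF p(1) J True] p x by blast
      next
        case False
        then obtain k where i: "i = m + k" using le_Suc_ex not_less by blast
        obtain J' where J': "J' \<in> S m" "sub p J'" using anc p(1) i by blast
        have "x \<in> iv J'" using gap_sub[OF p(1)] p(2) J'(2) by (auto simp: iv_def sub_def)
        have "J' = J"
        proof (rule ccontr)
          assume "J' \<noteq> J"
          then have "sep J' J" using sep_stage J' J by blast
          then show False using \<open>x \<in> iv J'\<close> x by (auto simp: iv_def sep_def)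
        qed
        then have "p \<in> desc m J k" using sub_desc[OF J] p(1) J'(2) i by simp
        then show False using p(2) x i unfolding V_def by blast
      qed
    qed
    ultimately show "x \<in> C \<inter> iv J" using x C_eq by auto
  qed
  have gmeas: "emeasure lborel (gp i q) = ennreal (a^i)" for i q
    using apos by (simp add: gp_def)
  have "emeasure lborel V \<le> (\<Sum>k. emeasure lborel (\<Union>q\<in>desc m J k. gp (Suc (m+k)) q))"
    unfolding V_def by (intro emeasure_subadditive_countably) (auto simp: gp_def intro!: borel_open)
  also have "\<dots> \<le> (\<Sum>k. ennreal (a^(Suc m) * (2*a)^k))"
  proof (intro suminf_le allI)
    fix k
    have "emeasure lborel (\<Union>q\<in>desc m J k. gp (Suc (m+k)) q)
        \<le> (\<Sum>q\<in>desc m J k. emeasure lborel (gp (Suc (m+k)) q))"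
      using desc_card by (intro emeasure_subadditive_finite) (auto simp: gp_def)
    also have "\<dots> = of_nat (card (desc m J k)) * ennreal (a^(Suc (m+k)))"
      by (simp add: gmeas)
    also have "\<dots> \<le> of_nat (2^k) * ennreal (a^(Suc (m+k)))"
      using desc_card[of m J k] by (intro mult_right_mono of_nat_mono) auto
    also have "\<dots> = ennreal (a^(Suc m) * (2*a)^k)"
      using apos by (simp add: ennreal_mult power_add power_mult_distrib ennreal_of_nat_eq_real_of_nat mult_ac)
    finally show "emeasure lborel (\<Union>q\<in>desc m J k. gp (Suc (m+k)) q) \<le> ennreal (a^(Suc m) * (2*a)^k)" .
  qed auto
  also have "\<dots> = ennreal (a^(Suc m)/(1-2*a))"
  proof -
    have g: "(\<lambda>k. (2*a)^k) sums (1/(1-2*a))" using apos asmall by (intro geometric_sums) auto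
    have "(\<lambda>k. a^(Suc m) * (2*a)^k) sums (a^(Suc m) * (1/(1-2*a)))" by (rule sums_mult[OF g])
    then show ?thesis using apos
      by (subst suminf_ennreal2) (auto simp: sums_iff)
  qed
  finally have V: "emeasure lborel V \<le> ennreal (a^(Suc m)/(1-2*a))" .
  have Le: "ennreal (Lm m) = emeasure lborel (iv J)"
    using len[OF J] Lm_pos[of m] by (simp add: iv_def)
  have Vo: "V \<in> sets borel" unfolding V_def gp_def by (intro borel_open open_UN) auto
  have "emeasure lborel (iv J) \<le> emeasure lborel ((iv J - V) \<union> V)"
    using Vo by (intro emeasure_mono) (auto simp: iv_def)
  also have "\<dots> \<le> emeasure lborel (iv J - V) + emeasure lborel V"
    using Vo by (intro emeasure_subadditive) (auto simp: iv_def)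
  also have "\<dots> \<le> emeasure lborel (C \<inter> iv J) + ennreal (a^(Suc m)/(1-2*a))"
    using sub1 V by (intro add_mono emeasure_mono) (auto simp: iv_def)
  finally have "ennreal (Lm m) \<le> emeasure lborel (C \<inter> iv J) + ennreal (a^(Suc m)/(1-2*a))"
    using Le by simp
  then have "ennreal (a^(Suc m)/(1-2*a)) + ennreal (al/2^m) \<le> ennreal (a^(Suc m)/(1-2*a)) + emeasure lborel (C \<inter> iv J)"
    using al_pos apos asmall by (simp add: Lm_def ennreal_plus[symmetric] add_ac del: ennreal_plus)
  then show ?thesis by (simp add: ennreal_add_left_cancel_le)
qed

end



lemma sum_le_single:
  fixes f :: "'i \<Rightarrow> ennreal"
  assumes "finite A" "\<And>i. i \<in> A \<Longrightarrow> f i \<le> B"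
    "\<And>i j. i \<in> A \<Longrightarrow> j \<in> A \<Longrightarrow> f i \<noteq> 0 \<Longrightarrow> f j \<noteq> 0 \<Longrightarrow> i = j"
  shows "sum f A \<le> B"
proof (cases "\<exists>i\<in>A. f i \<noteq> 0")
  case True
  then obtain i where i: "i \<in> A" "f i \<noteq> 0" by blast
  have "sum f A = f i + sum f (A - {i})" using assms(1) i(1) by (simp add: sum.remove)
  also have "sum f (A - {i}) = 0" using assms(3) i by (intro sum.neutral) blast
  finally show ?thesis using assms(2) i by simp
next
  case False
  then have "sum f A = 0" by (intro sum.neutral) blast
  then show ?thesis by simp
qed

locale fatcs = fatc + fixes s :: real assumes s0: "0 < s" and s1: "s < 1"
begin

definition kern :: "real \<Rightarrow> real \<Rightarrow> real" where "kern x y = \<bar>x - y\<bar> powr (-(1+s))"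
abbreviation u where "u \<equiv> (indicator C :: real \<Rightarrow> real)"
definition F where "F x y = \<bar>u y - u x\<bar> / (\<bar>x - y\<bar> powr s * ball_I_meas x \<bar>x - y\<bar>)"

lemma kern_sym: "kern x y = kern y x" by (simp add: kern_def abs_minus_commute)

lemma ptwise:
  assumes "x \<in> {0..1}" "y \<in> {0..1}"
  shows "F x y \<le> \<bar>u y - u x\<bar> * kern x y \<and> \<bar>u y - u x\<bar> * kern x y / 2 \<le> F x y"
proof (cases "x = y")
  case True then show ?thesis by (simp add: F_def kern_def)
next
  case False
  define r where "r = \<bar>x - y\<bar>"
  define b where "b = ball_I_meas x r"
  define d where "d = \<bar>u y - u x\<bar>"
  have r: "r > 0" using False by (simp add: r_def)
  have b: "r \<le> b" "b \<le> 2*r" using bm_bounds[OF assms False] by (auto simp: b_def r_def ball_I_meas_def)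
  have d: "d \<ge> 0" by (simp add: d_def)
  have rs: "r powr s > 0" using r by simp
  have k: "kern x y = 1 / (r powr s * r)"
  proof -
    have "r powr (-(1+s)) = inverse (r powr (1+s))" by (rule powr_minus)
    moreover have "r powr (1+s) = r powr s * r" using r by (simp add: powr_add)
    ultimately show ?thesis by (simp add: kern_def r_def[symmetric] divide_inverse)
  qed
  have F: "F x y = d / (r powr s * b)" by (simp add: F_def d_def r_def b_def)
  have l1: "r powr s * r \<le> r powr s * b" using b rs by simp
  have l2: "r powr s * b \<le> 2 * (r powr s * r)" using b rs by simp
  have A: "d / (r powr s * b) \<le> d / (r powr s * r)"
    using l1 d rs r by (intro divide_left_mono) auto
  have B: "d / (2 * (r powr s * r)) \<le> d / (r powr s * b)"
    using l2 d rs r b by (intro divide_left_mono) auto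
  have e1: "d * kern x y = d / (r powr s * r)" by (simp add: k)
  have e2: "d * kern x y / 2 = d / (2 * (r powr s * r))" by (simp add: k)
  show ?thesis unfolding d_def[symmetric] F e1 e2 using A B by simp
qed

lemma kern_meas[measurable]: "(\<lambda>(x,y). kern x y) \<in> borel_measurable (lborel \<Otimes>\<^sub>M lborel)"
  unfolding kern_def by measurable

lemma kern_meas2[measurable]: "kern x \<in> borel_measurable lborel"
  unfolding kern_def by measurable

lemma test: "(\<lambda>x. \<integral>\<^sup>+y. ennreal (kern x y) * (indicator C x * indicator ({0..1} - C) y) \<partial>lborel) \<in> borel_measurable lborel"
  by measurable

definition gl where "gl i p = (fst p + snd p)/2 - a^(Suc i)/2"
definition gr where "gr i p = (fst p + snd p)/2 + a^(Suc i)/2"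

lemma gp_eq: "gp (Suc i) p = {gl i p <..< gr i p}" by (simp add: gp_def gl_def gr_def)
lemma glr: "gr i p - gl i p = a^(Suc i)" by (simp add: gl_def gr_def)

lemma tail_conv: "ennreal (- (t powr (-(1+s)+1)) / (-(1+s)+1)) = ennreal (1/s) * ennreal (t powr (-s))"
proof -
  have "- (t powr (-(1+s)+1)) / (-(1+s)+1) = (1/s) * t powr (-s)" using s0 by (simp add: field_simps)
  then have "ennreal (- (t powr (-(1+s)+1)) / (-(1+s)+1)) = ennreal ((1/s) * t powr (-s))" by (rule arg_cong)
  also have "\<dots> = ennreal (1/s) * ennreal (t powr (-s))" using s0 by (intro ennreal_mult') simp
  finally show ?thesis .
qed

lemma inner_upper:
  assumes p: "p \<in> S i" and x: "x \<in> gp (Suc i) p"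
  shows "(\<integral>\<^sup>+y. ennreal (kern x y) * indicator C y \<partial>lborel)
    \<le> ennreal (1/s) * (ennreal ((x - gl i p) powr (-s)) + ennreal ((gr i p - x) powr (-s)))"
proof -
  have xin: "gl i p < x" "x < gr i p" using x by (auto simp: gp_eq)
  have "(\<integral>\<^sup>+y. ennreal (kern x y) * indicator C y \<partial>lborel)
     \<le> (\<integral>\<^sup>+y. ennreal (kern x y) * indicator {..gl i p} y + ennreal (kern x y) * indicator {gr i p..} y \<partial>lborel)"
  proof (intro nn_integral_mono)
    fix y
    show "ennreal (kern x y) * indicator C y \<le> ennreal (kern x y) * indicator {..gl i p} y + ennreal (kern x y) * indicator {gr i p..} y"
    proof (cases "y \<in> C")
      case True
      then have "y \<notin> gp (Suc i) p" using gap_notC[OF p] by blast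
      then have "y \<le> gl i p \<or> gr i p \<le> y" by (auto simp: gp_eq)
      then show ?thesis by (auto simp: indicator_def)
    qed simp
  qed
  also have "\<dots> = (\<integral>\<^sup>+y. ennreal (kern x y) * indicator {..gl i p} y \<partial>lborel) + (\<integral>\<^sup>+y. ennreal (kern x y) * indicator {gr i p..} y \<partial>lborel)"
    by (intro nn_integral_add) measurable
  also have "(\<integral>\<^sup>+y. ennreal (kern x y) * indicator {..gl i p} y \<partial>lborel) = ennreal (1/s) * ennreal ((x - gl i p) powr (-s))"
    unfolding kern_def using tail_left[OF xin(1), of "-(1+s)"] s0 tail_conv by simp
  also have "(\<integral>\<^sup>+y. ennreal (kern x y) * indicator {gr i p..} y \<partial>lborel) = ennreal (1/s) * ennreal ((gr i p - x) powr (-s))"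
    unfolding kern_def using tail_right[OF xin(2), of "-(1+s)"] s0 tail_conv by simp
  finally show ?thesis by (simp add: distrib_left)
qed

definition H where "H i p x = ennreal (1/s) * (ennreal ((x - gl i p) powr (-s)) + ennreal ((gr i p - x) powr (-s)))"

lemma H_meas[measurable]: "H i p \<in> borel_measurable lborel"
  unfolding H_def by measurable

lemma outer_upper: "(\<integral>\<^sup>+x. indicator (gp (Suc i) p) x * H i p x \<partial>lborel)
   \<le> ennreal (2/(s*(1-s)) * (a^(Suc i)) powr (1-s))"
proof -
  have "a^(Suc i) > 0" using apos by simp
  then have lt: "gl i p < gr i p" using glr[of i p] by linarith
  have "(\<integral>\<^sup>+x. indicator (gp (Suc i) p) x * H i p x \<partial>lborel) \<le> (\<integral>\<^sup>+x. H i p x * indicator {gl i p..gr i p} x \<partial>lborel)"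
    by (intro nn_integral_mono) (auto simp: gp_eq indicator_def)
  also have "\<dots> = ennreal (1/s) * ((\<integral>\<^sup>+x. ennreal ((x - gl i p) powr (-s)) * indicator {gl i p..gr i p} x \<partial>lborel)
       + (\<integral>\<^sup>+x. ennreal ((gr i p - x) powr (-s)) * indicator {gl i p..gr i p} x \<partial>lborel))"
    unfolding H_def
    by (subst nn_integral_add[symmetric], measurable, subst nn_integral_cmult[symmetric], measurable)
       (simp add: mult_ac distrib_left distrib_right)
  also have "\<dots> = ennreal (1/s) * (ennreal ((a^(Suc i)) powr (1-s) / (1-s)) + ennreal ((a^(Suc i)) powr (1-s) / (1-s)))"
    using head_left[OF lt, of "-s"] head_right[OF lt, of "-s"] s1 glr[of i p] by simp
  also have "\<dots> = ennreal (2/(s*(1-s)) * (a^(Suc i)) powr (1-s))"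
    using s0 s1 by (simp add: ennreal_mult[symmetric] ennreal_plus[symmetric] del: ennreal_plus)
  finally show ?thesis .
qed

lemma pow_powr: "(a^n) powr t = (a powr t)^n"
proof -
  have "(a^n) powr t = (a powr (real n)) powr t" using apos by (simp add: powr_realpow)
  also have "\<dots> = a powr (real n * t)" by (simp add: powr_powr)
  also have "\<dots> = (a powr t)^n" using apos by (simp add: powr_power)
  finally show ?thesis .
qed

definition g1 where "g1 x y = ennreal (kern x y) * (indicator C x * indicator ({0..1} - C) y)"
definition g2 where "g2 x y = ennreal (kern x y) * (indicator ({0..1} - C) x * indicator C y)"

lemma g1_meas[measurable]: "(\<lambda>(x,y). g1 x y) \<in> borel_measurable (lborel \<Otimes>\<^sub>M lborel)"
  unfolding g1_def by measurable
lemma g2_meas[measurable]: "(\<lambda>(x,y). g2 x y) \<in> borel_measurable (lborel \<Otimes>\<^sub>M lborel)"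
  unfolding g2_def by measurable
lemma g1_meas'[measurable]: "g1 x \<in> borel_measurable lborel"
  unfolding g1_def by measurable
lemma g2_meas'[measurable]: "g2 x \<in> borel_measurable lborel"
  unfolding g2_def by measurable

lemma energy_le: "besov_energy s u \<le> (\<integral>\<^sup>+x. (\<integral>\<^sup>+y. g1 x y + g2 x y \<partial>lborel) \<partial>lborel)"
  unfolding besov_energy_def
proof (intro nn_integral_mono)
  fix x
  show "(\<integral>\<^sup>+y. ennreal (\<bar>u y - u x\<bar> / (\<bar>x - y\<bar> powr s * ball_I_meas x \<bar>x - y\<bar>)) * indicator {0..1} y \<partial>lborel) * indicator {0..1} x
     \<le> (\<integral>\<^sup>+y. g1 x y + g2 x y \<partial>lborel)"
  proof (cases "x \<in> {0..1}")
    case xI: True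
    have "(\<integral>\<^sup>+y. ennreal (\<bar>u y - u x\<bar> / (\<bar>x - y\<bar> powr s * ball_I_meas x \<bar>x - y\<bar>)) * indicator {0..1} y \<partial>lborel)
       \<le> (\<integral>\<^sup>+y. g1 x y + g2 x y \<partial>lborel)"
    proof (intro nn_integral_mono)
      fix y
      show "ennreal (\<bar>u y - u x\<bar> / (\<bar>x - y\<bar> powr s * ball_I_meas x \<bar>x - y\<bar>)) * indicator {0..1} y \<le> g1 x y + g2 x y"
      proof (cases "y \<in> {0..1}")
        case yI: True
        have "ennreal (F x y) \<le> ennreal (\<bar>u y - u x\<bar> * kern x y)"
          using ptwise[OF xI yI] by (intro ennreal_leI) simp
        also have "\<dots> = g1 x y + g2 x y"
          using xI yI by (cases "x \<in> C"; cases "y \<in> C") (auto simp: g1_def g2_def)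
        finally show ?thesis using yI by (simp add: F_def)
      qed simp
    qed
    then show ?thesis using xI by simp
  qed simp
qed

lemma sym_g: "(\<integral>\<^sup>+x. (\<integral>\<^sup>+y. g1 x y \<partial>lborel) \<partial>lborel) = (\<integral>\<^sup>+x. (\<integral>\<^sup>+y. g2 x y \<partial>lborel) \<partial>lborel)"
proof -
  have "(\<integral>\<^sup>+x. (\<integral>\<^sup>+y. g1 x y \<partial>lborel) \<partial>lborel) = (\<integral>\<^sup>+y. (\<integral>\<^sup>+x. g1 x y \<partial>lborel) \<partial>lborel)"
    by (rule lborel_pair.Fubini'[symmetric]) measurable
  also have "\<dots> = (\<integral>\<^sup>+y. (\<integral>\<^sup>+x. g2 y x \<partial>lborel) \<partial>lborel)"
    by (simp add: g1_def g2_def kern_sym mult_ac)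
  finally show ?thesis .
qed

lemma Q_le: "(\<integral>\<^sup>+x. (\<integral>\<^sup>+y. g2 x y \<partial>lborel) \<partial>lborel)
   \<le> ennreal (1/(s*(1-s))) * (\<Sum>i. ennreal ((2 * a powr (1-s))^Suc i))"
proof -
  have "(\<integral>\<^sup>+x. (\<integral>\<^sup>+y. g2 x y \<partial>lborel) \<partial>lborel)
     \<le> (\<integral>\<^sup>+x. (\<Sum>i. \<Sum>p\<in>S i. indicator (gp (Suc i) p) x * H i p x) \<partial>lborel)"
  proof (intro nn_integral_mono)
    fix x
    show "(\<integral>\<^sup>+y. g2 x y \<partial>lborel) \<le> (\<Sum>i. \<Sum>p\<in>S i. indicator (gp (Suc i) p) x * H i p x)"
    proof (cases "x \<in> {0..1} - C")
      case True
      then have "x \<in> U" using C_eq by auto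
      then obtain i p where p: "p \<in> S i" "x \<in> gp (Suc i) p" unfolding U_def by blast
      have "(\<integral>\<^sup>+y. g2 x y \<partial>lborel) = (\<integral>\<^sup>+y. ennreal (kern x y) * indicator C y \<partial>lborel)"
        using True by (simp add: g2_def)
      also have "\<dots> \<le> H i p x" unfolding H_def by (rule inner_upper[OF p])
      also have "\<dots> = indicator (gp (Suc i) p) x * H i p x" using p by simp
      also have "\<dots> \<le> (\<Sum>p\<in>S i. indicator (gp (Suc i) p) x * H i p x)"
        using p card_stage[of i] by (intro member_le_sum) auto
      also have "\<dots> \<le> (\<Sum>i. \<Sum>p\<in>S i. indicator (gp (Suc i) p) x * H i p x)"
        using sum_le_suminf[of "\<lambda>i. \<Sum>p\<in>S i. indicator (gp (Suc i) p) x * H i p x" "{i}"] by simp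
      finally show ?thesis .
    next
      case False
      then show ?thesis by (simp add: g2_def)
    qed
  qed
  also have "\<dots> = (\<Sum>i. \<integral>\<^sup>+x. (\<Sum>p\<in>S i. indicator (gp (Suc i) p) x * H i p x) \<partial>lborel)"
    by (intro nn_integral_suminf) (auto simp: gp_def)
  also have "\<dots> = (\<Sum>i. \<Sum>p\<in>S i. \<integral>\<^sup>+x. indicator (gp (Suc i) p) x * H i p x \<partial>lborel)"
    by (intro suminf_cong nn_integral_sum) (auto simp: gp_def)
  also have "\<dots> \<le> (\<Sum>i. \<Sum>p\<in>S i. ennreal (2/(s*(1-s)) * (a^(Suc i)) powr (1-s)))"
    by (intro suminf_le sum_mono outer_upper) auto
  also have "\<dots> = (\<Sum>i. ennreal (1/(s*(1-s))) * ennreal ((2 * a powr (1-s))^Suc i))"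
  proof (intro suminf_cong)
    fix i
    have "(\<Sum>p\<in>S i. ennreal (2/(s*(1-s)) * (a^(Suc i)) powr (1-s)))
        = of_nat (2^i) * ennreal (2/(s*(1-s)) * (a^(Suc i)) powr (1-s))"
      using card_stage[of i] by simp
    also have "\<dots> = ennreal (2^i * (2/(s*(1-s)) * (a^(Suc i)) powr (1-s)))"
      using s0 s1 by (subst ennreal_mult) (auto simp: ennreal_of_nat_eq_real_of_nat)
    also have "2^i * (2/(s*(1-s)) * (a^(Suc i)) powr (1-s)) = 1/(s*(1-s)) * (2 * a powr (1-s))^Suc i"
      using pow_powr[of "Suc i" "1-s"] by (simp add: power_mult_distrib del: power_Suc) (simp add: field_simps)
    also have "ennreal \<dots> = ennreal (1/(s*(1-s))) * ennreal ((2 * a powr (1-s))^Suc i)"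
      using s0 s1 by (intro ennreal_mult) auto
    finally show "(\<Sum>p\<in>S i. ennreal (2/(s*(1-s)) * (a^(Suc i)) powr (1-s))) = ennreal (1/(s*(1-s))) * ennreal ((2 * a powr (1-s))^Suc i)" .
  qed
  also have "\<dots> = ennreal (1/(s*(1-s))) * (\<Sum>i. ennreal ((2 * a powr (1-s))^Suc i))"
    by simp
  finally show ?thesis .
qed

lemma upper: "besov_energy s u \<le> ennreal (2/(s*(1-s))) * (\<Sum>i. ennreal ((2 * a powr (1-s))^Suc i))"
proof -
  have "besov_energy s u \<le> (\<integral>\<^sup>+x. (\<integral>\<^sup>+y. g1 x y + g2 x y \<partial>lborel) \<partial>lborel)" by (rule energy_le)
  also have "\<dots> = (\<integral>\<^sup>+x. (\<integral>\<^sup>+y. g1 x y \<partial>lborel) + (\<integral>\<^sup>+y. g2 x y \<partial>lborel) \<partial>lborel)"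
    by (intro nn_integral_cong nn_integral_add) measurable
  also have "\<dots> = (\<integral>\<^sup>+x. (\<integral>\<^sup>+y. g1 x y \<partial>lborel) \<partial>lborel) + (\<integral>\<^sup>+x. (\<integral>\<^sup>+y. g2 x y \<partial>lborel) \<partial>lborel)"
    by (intro nn_integral_add) measurable
  also have "\<dots> = 2 * (\<integral>\<^sup>+x. (\<integral>\<^sup>+y. g2 x y \<partial>lborel) \<partial>lborel)"
    by (simp add: sym_g mult_2)
  also have "\<dots> \<le> 2 * (ennreal (1/(s*(1-s))) * (\<Sum>i. ennreal ((2 * a powr (1-s))^Suc i)))"
    by (intro mult_left_mono Q_le) auto
  also have "\<dots> = ennreal (2/(s*(1-s))) * (\<Sum>i. ennreal ((2 * a powr (1-s))^Suc i))"
    using s0 s1 by (simp add: mult.assoc[symmetric] ennreal_mult[symmetric] ennreal_numeral[symmetric] del: ennreal_numeral)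
  finally show ?thesis .
qed

end


context fatcs begin
definition mm where "mm i = (LEAST m. (1/2::real)^m \<le> a^(Suc i))"
definition dl where "dl i = (1/2::real)^(mm i)"

lemma mm_props: "dl i \<le> a^(Suc i) \<and> a^(Suc i) < 2 * dl i \<and> Suc i \<le> mm i \<and> dl i > 0"
proof -
  have ex: "\<exists>m. (1/2::real)^m \<le> a^(Suc i)"
    using real_arch_pow_inv[of "a^(Suc i)" "1/2"] apos by (auto intro: less_imp_le)
  have d1: "dl i \<le> a^(Suc i)" unfolding dl_def mm_def by (rule LeastI_ex[OF ex])
  have aS: "a^(Suc i) < (1/2)^(Suc i)" using apos asmall by (intro power_strict_mono) auto
  have "(1/2::real)^(Suc i) \<le> 1" by (intro power_le_one) auto
  then have a1: "a^(Suc i) < 1" using aS by linarith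
  have m0: "mm i \<noteq> 0"
  proof
    assume "mm i = 0"
    then show False using d1 a1 by (simp add: dl_def)
  qed
  have "\<not> (1/2::real)^(mm i - 1) \<le> a^(Suc i)"
    unfolding mm_def by (rule not_less_Least) (use m0 in \<open>simp add: mm_def\<close>)
  then have "a^(Suc i) < (1/2)^(mm i - 1)" by simp
  also have "(1/2::real)^(mm i - 1) = 2 * dl i"
    using m0 unfolding dl_def by (cases "mm i") auto
  finally have d2: "a^(Suc i) < 2 * dl i" .
  have d3: "Suc i \<le> mm i"
  proof (rule ccontr)
    assume "\<not> Suc i \<le> mm i"
    then have "(1/2::real)^(Suc i) \<le> (1/2)^(mm i)" by (intro power_decreasing) auto
    then show False using d1 aS unfolding dl_def by simp
  qed
  show ?thesis using d1 d2 d3 by (simp add: dl_def)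
qed

definition KK where "KK i p = iv (gr i p, gr i p + Lm (mm i))"
definition RR where "RR i p = {gr i p - dl i <..< gr i p}"
definition cc where "cc i = 1 / (2 * (2 * dl i) powr (1+s))"
definition tm where "tm i p x y = indicator (C \<inter> KK i p) x * indicator (RR i p) y * ennreal (cc i)"

lemma KK_stage: "p \<in> S i \<Longrightarrow> (gr i p, gr i p + Lm (mm i)) \<in> S (mm i)"
proof -
  assume p: "p \<in> S i"
  have "(gr i p, snd p) \<in> S (Suc i)" using right_child[OF p] by (simp add: gr_def)
  from leftmost[OF this, of "mm i - Suc i"] show ?thesis using mm_props[of i] by simp
qed

lemma RR_sub: "RR i p \<subseteq> gp (Suc i) p"
  using mm_props[of i] glr[of i p] by (auto simp: RR_def gp_eq)

lemma tm_le: assumes p: "p \<in> S i" shows "tm i p x y \<le> ennreal (F x y) * indicator {0..1} y"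
proof (cases "x \<in> C \<inter> KK i p \<and> y \<in> RR i p")
  case True
  have xI: "x \<in> {0..1}" using True C_sub by auto
  have yg: "y \<in> gp (Suc i) p" using True RR_sub by blast
  have yI: "y \<in> {0..1}" using gap_I[OF p] yg by blast
  have yC: "y \<notin> C" using gap_notC[OF p yg] .
  have Lle: "Lm (mm i) \<le> dl i" using Lm_le[of "mm i"] by (simp add: dl_def power_one_over)
  have xy: "0 < x - y" "x - y \<le> 2 * dl i" using True Lle by (auto simp: KK_def RR_def iv_def)
  have "(2 * dl i) powr (-(1+s)) \<le> (x - y) powr (-(1+s))"
    using xy s0 by (intro powr_mono2') auto
  moreover have "(2 * dl i) powr (-(1+s)) = 1 / (2 * dl i) powr (1+s)"
    using powr_minus[of "2 * dl i" "1+s"] by (simp add: divide_inverse)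
  ultimately have "cc i \<le> kern x y / 2" using xy by (simp add: cc_def kern_def)
  also have "kern x y / 2 = \<bar>u y - u x\<bar> * kern x y / 2" using True yC by simp
  also have "\<dots> \<le> F x y" using ptwise[OF xI yI] by simp
  finally have "ennreal (cc i) \<le> ennreal (F x y)" by (rule ennreal_leI)
  then show ?thesis using True yI by (simp add: tm_def)
next
  case False
  then show ?thesis by (auto simp: tm_def)
qed

lemma tm_nz: "tm i p x y \<noteq> 0 \<Longrightarrow> y \<in> RR i p"
proof (rule ccontr)
  assume "tm i p x y \<noteq> 0" "y \<notin> RR i p"
  then show False by (simp add: tm_def)
qed

lemma sum_tm_le: "(\<Sum>ip\<in>Sigma {..<N} S. tm (fst ip) (snd ip) x y) \<le> ennreal (F x y) * indicator {0..1} y"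
proof (intro sum_le_single)
  show "finite (Sigma {..<N} S)" using card_stage by (intro finite_SigmaI) auto
  show "tm (fst ip) (snd ip) x y \<le> ennreal (F x y) * indicator {0..1} y" if "ip \<in> Sigma {..<N} S" for ip
    using that tm_le by auto
  show "ip = jq" if "ip \<in> Sigma {..<N} S" "jq \<in> Sigma {..<N} S" "tm (fst ip) (snd ip) x y \<noteq> 0" "tm (fst jq) (snd jq) x y \<noteq> 0" for ip jq
  proof (rule ccontr)
    assume ne: "ip \<noteq> jq"
    have "y \<in> RR (fst ip) (snd ip)" "y \<in> RR (fst jq) (snd jq)" using that tm_nz by blast+
    then have "y \<in> gp (Suc (fst ip)) (snd ip)" "y \<in> gp (Suc (fst jq)) (snd jq)" using RR_sub by blast+
    moreover have "gp (Suc (fst ip)) (snd ip) \<inter> gp (Suc (fst jq)) (snd jq) = {}"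
      using that ne by (intro gaps_disj) (auto simp: prod_eq_iff)
    ultimately show False by blast
  qed
qed

lemma tm_zero: "x \<notin> {0..1} \<Longrightarrow> tm i p x y = 0"
proof -
  assume "x \<notin> {0..1}"
  then have "x \<notin> C" using C_sub by auto
  then show ?thesis by (simp add: tm_def)
qed

lemma KK_sets[measurable]: "KK i p \<in> sets borel" by (simp add: KK_def iv_def)
lemma RR_sets[measurable]: "RR i p \<in> sets borel" by (simp add: RR_def)

lemma tm_meas[measurable]: "tm i p x \<in> borel_measurable lborel"
  unfolding tm_def by measurable

lemma inner_tm: "(\<integral>\<^sup>+y. tm i p x y \<partial>lborel) = indicator (C \<inter> KK i p) x * ennreal (cc i) * ennreal (dl i)"
proof -
  have "(\<integral>\<^sup>+y. tm i p x y \<partial>lborel) = (\<integral>\<^sup>+y. (indicator (C \<inter> KK i p) x * ennreal (cc i)) * indicator (RR i p) y \<partial>lborel)"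
    by (simp add: tm_def mult_ac)
  also have "\<dots> = indicator (C \<inter> KK i p) x * ennreal (cc i) * emeasure lborel (RR i p)"
    by (rule nn_integral_cmult_indicator) simp
  also have "emeasure lborel (RR i p) = ennreal (dl i)" using mm_props[of i] by (simp add: RR_def)
  finally show ?thesis .
qed

lemma real_ineq: "al/8 * (a powr (1-s))^Suc i \<le> cc i * dl i * (al * dl i)"
proof -
  define A where "A = a^(Suc i)"
  define d where "d = dl i"
  define P where "P = (2*d) powr s"
  have d: "d > 0" "A \<le> 2*d" using mm_props[of i] by (auto simp: d_def A_def)
  have P: "P > 0" using d by (simp add: P_def)
  have A0: "A > 0" using apos by (simp add: A_def)
  have e1: "(a powr (1-s))^Suc i = A powr (1-s)" unfolding A_def by (rule pow_powr[symmetric])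
  have e2: "A powr (1-s) \<le> (2*d) powr (1-s)" using d A0 s1 by (intro powr_mono2) auto
  have e3: "(2*d) powr (1-s) = 2*d / P" using d by (simp add: P_def powr_diff)
  have e4: "cc i = 1 / (2 * (2*d * P))" using d by (simp add: cc_def P_def powr_add d_def)
  have "al/8 * (a powr (1-s))^Suc i \<le> al/8 * (2*d/P)"
    using e1 e2 e3 al_pos by (intro mult_left_mono) auto
  also have "\<dots> = cc i * d * (al * d)" using e4 d P by (simp add: field_simps)
  finally show ?thesis by (simp add: d_def)
qed

lemma term_lower: assumes p: "p \<in> S i"
  shows "ennreal (al/8 * (a powr (1-s))^Suc i) \<le> ennreal (cc i * dl i) * emeasure lborel (C \<inter> KK i p)"
proof -
  have "ennreal (al/2^(mm i)) \<le> emeasure lborel (C \<inter> KK i p)"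
    using density[OF KK_stage[OF p]] by (simp add: KK_def)
  moreover have "al/2^(mm i) = al * dl i" by (simp add: dl_def power_one_over)
  ultimately have m: "ennreal (al * dl i) \<le> emeasure lborel (C \<inter> KK i p)" by simp
  have c0: "cc i * dl i \<ge> 0" using mm_props[of i] by (simp add: cc_def)
  have "ennreal (al/8 * (a powr (1-s))^Suc i) \<le> ennreal (cc i * dl i * (al * dl i))"
    by (intro ennreal_leI real_ineq)
  also have "\<dots> = ennreal (cc i * dl i) * ennreal (al * dl i)" using c0 by (rule ennreal_mult')
  also have "\<dots> \<le> ennreal (cc i * dl i) * emeasure lborel (C \<inter> KK i p)"
    using m by (intro mult_left_mono) auto
  finally show ?thesis .
qed

lemma lower_N: "(\<Sum>i<N. ennreal (al/16 * (2 * a powr (1-s))^Suc i)) \<le> besov_energy s u"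
proof -
  have c0: "cc i \<ge> 0" "dl i \<ge> 0" for i using mm_props[of i] by (auto simp: cc_def)
  have "(\<Sum>i<N. ennreal (al/16 * (2 * a powr (1-s))^Suc i))
      \<le> (\<Sum>i<N. \<Sum>p\<in>S i. ennreal (cc i * dl i) * emeasure lborel (C \<inter> KK i p))"
  proof (intro sum_mono)
    fix i
    have "ennreal (al/16 * (2 * a powr (1-s))^Suc i) = (\<Sum>p\<in>S i. ennreal (al/8 * (a powr (1-s))^Suc i))"
    proof -
      have "(\<Sum>p\<in>S i. ennreal (al/8 * (a powr (1-s))^Suc i)) = of_nat (2^i) * ennreal (al/8 * (a powr (1-s))^Suc i)"
        using card_stage[of i] by simp
      also have "\<dots> = ennreal (2^i * (al/8 * (a powr (1-s))^Suc i))"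
        using al_pos by (subst ennreal_mult) (auto simp: ennreal_of_nat_eq_real_of_nat)
      also have "2^i * (al/8 * (a powr (1-s))^Suc i) = al/16 * (2 * a powr (1-s))^Suc i"
        by (simp add: power_mult_distrib del: power_Suc) (simp add: field_simps)
      finally show ?thesis by simp
    qed
    also have "\<dots> \<le> (\<Sum>p\<in>S i. ennreal (cc i * dl i) * emeasure lborel (C \<inter> KK i p))"
      by (intro sum_mono term_lower)
    finally show "ennreal (al/16 * (2 * a powr (1-s))^Suc i) \<le> (\<Sum>p\<in>S i. ennreal (cc i * dl i) * emeasure lborel (C \<inter> KK i p))" .
  qed
  also have "\<dots> = (\<Sum>ip\<in>Sigma {..<N} S. ennreal (cc (fst ip) * dl (fst ip)) * emeasure lborel (C \<inter> KK (fst ip) (snd ip)))"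
    using card_stage by (subst sum.Sigma) (auto simp: case_prod_beta)
  also have "\<dots> = (\<Sum>ip\<in>Sigma {..<N} S. \<integral>\<^sup>+x. indicator (C \<inter> KK (fst ip) (snd ip)) x * ennreal (cc (fst ip)) * ennreal (dl (fst ip)) \<partial>lborel)"
  proof (intro sum.cong refl)
    fix ip
    have "(\<integral>\<^sup>+x. indicator (C \<inter> KK (fst ip) (snd ip)) x * ennreal (cc (fst ip)) * ennreal (dl (fst ip)) \<partial>lborel)
       = (\<integral>\<^sup>+x. ennreal (cc (fst ip) * dl (fst ip)) * indicator (C \<inter> KK (fst ip) (snd ip)) x \<partial>lborel)"
      using c0 by (simp add: ennreal_mult mult_ac)
    also have "\<dots> = ennreal (cc (fst ip) * dl (fst ip)) * emeasure lborel (C \<inter> KK (fst ip) (snd ip))"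
      by (rule nn_integral_cmult_indicator) simp
    finally show "ennreal (cc (fst ip) * dl (fst ip)) * emeasure lborel (C \<inter> KK (fst ip) (snd ip)) = (\<integral>\<^sup>+x. indicator (C \<inter> KK (fst ip) (snd ip)) x * ennreal (cc (fst ip)) * ennreal (dl (fst ip)) \<partial>lborel)" by simp
  qed
  also have "\<dots> = (\<integral>\<^sup>+x. (\<Sum>ip\<in>Sigma {..<N} S. indicator (C \<inter> KK (fst ip) (snd ip)) x * ennreal (cc (fst ip)) * ennreal (dl (fst ip))) \<partial>lborel)"
    by (rule nn_integral_sum[symmetric]) measurable
  also have "\<dots> = (\<integral>\<^sup>+x. (\<integral>\<^sup>+y. (\<Sum>ip\<in>Sigma {..<N} S. tm (fst ip) (snd ip) x y) \<partial>lborel) \<partial>lborel)"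
    by (intro nn_integral_cong) (simp add: nn_integral_sum inner_tm)
  also have "\<dots> \<le> besov_energy s u"
    unfolding besov_energy_def
  proof (intro nn_integral_mono)
    fix x
    show "(\<integral>\<^sup>+y. (\<Sum>ip\<in>Sigma {..<N} S. tm (fst ip) (snd ip) x y) \<partial>lborel)
      \<le> (\<integral>\<^sup>+y. ennreal (\<bar>u y - u x\<bar> / (\<bar>x - y\<bar> powr s * ball_I_meas x \<bar>x - y\<bar>)) * indicator {0..1} y \<partial>lborel) * indicator {0..1} x"
    proof (cases "x \<in> {0..1}")
      case True
      have "(\<integral>\<^sup>+y. (\<Sum>ip\<in>Sigma {..<N} S. tm (fst ip) (snd ip) x y) \<partial>lborel)
         \<le> (\<integral>\<^sup>+y. ennreal (F x y) * indicator {0..1} y \<partial>lborel)"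
        by (intro nn_integral_mono sum_tm_le)
      then show ?thesis using True by (simp add: F_def)
    next
      case False
      then show ?thesis by (simp add: tm_zero)
    qed
  qed
  finally show ?thesis .
qed

lemma lower: "ennreal (al/16) * (\<Sum>i. ennreal ((2 * a powr (1-s))^Suc i)) \<le> besov_energy s u"
proof -
  have "(\<Sum>i. ennreal (al/16 * (2 * a powr (1-s))^Suc i)) = (\<Sum>i. ennreal (al/16) * ennreal ((2 * a powr (1-s))^Suc i))"
    using al_pos by (intro suminf_cong ennreal_mult) auto
  then have "ennreal (al/16) * (\<Sum>i. ennreal ((2 * a powr (1-s))^Suc i)) = (\<Sum>i. ennreal (al/16 * (2 * a powr (1-s))^Suc i))"
    by (simp only: ennreal_suminf_cmult)
  also have "\<dots> \<le> besov_energy s u"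
    by (intro suminf_le_const lower_N) auto
  finally show ?thesis .
qed

end

theorem proposition4p2:
  fixes s a :: real
  assumes "0 < s" "s < 1" "0 < a" "a < 1/3" "a < 1 / 2 powr (1 + s)"
  shows "\<exists>C::real. C \<ge> 1 \<and>
    ennreal (1 / C) * (\<Sum>j. ennreal ((2 * a powr (1 - s)) ^ Suc j))
      \<le> besov_energy s (indicator (fat_cantor a)) \<and>
    besov_energy s (indicator (fat_cantor a))
      \<le> ennreal C * (\<Sum>j. ennreal ((2 * a powr (1 - s)) ^ Suc j))"
proof -
  interpret fatcs a s using assms by unfold_locales auto
  define K where "K = max (2/(s*(1-s))) (16/al)"
  have ss: "s*(1-s) \<le> 1" "s*(1-s) > 0" using assms by (auto intro: mult_le_one mult_pos_pos)
  have K1: "2/(s*(1-s)) \<ge> 1" using ss by (simp add: field_simps)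
  have K2: "16/al > 0" using al_pos by simp
  have "16/al \<le> K" by (simp add: K_def)
  moreover have "K > 0" using K2 \<open>16/al \<le> K\<close> by linarith
  ultimately have "1/K \<le> al/16" using al_pos by (simp add: field_simps)
  then have "ennreal (1/K) * (\<Sum>j. ennreal ((2 * a powr (1 - s)) ^ Suc j)) \<le> ennreal (al/16) * (\<Sum>j. ennreal ((2 * a powr (1 - s)) ^ Suc j))"
    by (intro mult_right_mono ennreal_leI) auto
  also have "\<dots> \<le> besov_energy s (indicator (fat_cantor a))" by (rule lower)
  finally have L: "ennreal (1/K) * (\<Sum>j. ennreal ((2 * a powr (1 - s)) ^ Suc j)) \<le> besov_energy s (indicator (fat_cantor a))" .
  have "besov_energy s (indicator (fat_cantor a)) \<le> ennreal (2/(s*(1-s))) * (\<Sum>j. ennreal ((2 * a powr (1 - s)) ^ Suc j))"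
    by (rule upper)
  also have "\<dots> \<le> ennreal K * (\<Sum>j. ennreal ((2 * a powr (1 - s)) ^ Suc j))"
    by (intro mult_right_mono ennreal_leI) (auto simp: K_def)
  finally have U: "besov_energy s (indicator (fat_cantor a)) \<le> ennreal K * (\<Sum>j. ennreal ((2 * a powr (1 - s)) ^ Suc j))" .
  have "K \<ge> 1" using K1 unfolding K_def by simp
  then show ?thesis using L U by blast
qed


end
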